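(* Let $P=(p_1,\dots,p_n)$ be points in $\mathbb{R}^d$, $k\ge1$, and $\mathcal{F}$ a constraint for $k$-CMeans. Let $\lambda\ge1$ and let $\mathcal{C}=\{c_1,\dots,c_k\}\subset\mathbb{R}^d$ be the centers of a $\lambda$-approximate solution of the ordinary (unconstrained) $k$-means problem on $P$. Then the Cartesian product $[\mathcal{C}]^k=\mathcal{C}\times\cdots\times\mathcal{C}$ ($k$ factors) contains a $k$-tuple $(q_1,\dots,q_k)$ for which there is $(S_1,\dots,S_k)\in\mathcal{F}$ with $\frac1n\sum_{j=1}^k\sum_{i\in S_j}\|p_i-q_j\|^2\le(18\lambda+16)\,\delta^2_{opt}$.
   Context: A constraint for $k$-CMeans is a nonempty family $\mathcal{F}$ of ordered partitions $(S_1,\dots,S_k)$ of the index set $\{1,\dots,n\}$ into $k$ parts; $\delta^2_{opt}=\min_{(S_j)\in\mathcal{F}}\min_{c'_1,\dots,c'_k\in\mathbb{R}^d}\frac1n\sum_j\sum_{i\in S_j}\|p_i-c'_j\|^2$. The unconstrained $k$-means cost of a set $\mathcal{C}$ of $k$ points is $\omega=\frac1n\sum_{i=1}^n\min_{c\in\mathcal{C}}\|p_i-c\|^2$; $\mathcal{C}$ is a $\lambda$-approximate solution if $\omega\le\lambda\cdot\min_{|\mathcal{C}'|= k}\frac1n\sum_i\min_{c\in\mathcal{C}'}\|p_i-c\|^2$. *)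

theory Defs
  imports "HOL-Analysis.Analysis"
begin

text \<open>Ordered partition (S_1,...,S_k) of the index set {1..n} into k (possibly empty) parts;
  only the values S j for j in {1..k} matter.\<close>
definition ordered_partition :: "nat \<Rightarrow> nat \<Rightarrow> (nat \<Rightarrow> nat set) \<Rightarrow> bool" where
  "ordered_partition n k S \<longleftrightarrow>
     (\<forall>i\<in>{1..k}. \<forall>j\<in>{1..k}. i \<noteq> j \<longrightarrow> S i \<inter> S j = {}) \<and>
     (\<Union>j\<in>{1..k}. S j) = {1..n}"

definition assign_cost :: "nat \<Rightarrow> nat \<Rightarrow> (nat \<Rightarrow> 'a::euclidean_space) \<Rightarrow> (nat \<Rightarrow> nat set) \<Rightarrow> (nat \<Rightarrow> 'a) \<Rightarrow> real" where
  "assign_cost n k p S c = (1 / real n) * (\<Sum>j\<in>{1..k}. \<Sum>i\<in>S j. (norm (p i - c j))\<^sup>2)"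

definition delta_opt_sq :: "nat \<Rightarrow> nat \<Rightarrow> (nat \<Rightarrow> 'a::euclidean_space) \<Rightarrow> (nat \<Rightarrow> nat set) set \<Rightarrow> real" where
  "delta_opt_sq n k p F = Inf {assign_cost n k p S c | S c. S \<in> F}"

definition kmeans_cost :: "nat \<Rightarrow> (nat \<Rightarrow> 'a::euclidean_space) \<Rightarrow> 'a set \<Rightarrow> real" where
  "kmeans_cost n p C = (1 / real n) * (\<Sum>i\<in>{1..n}. Min ((\<lambda>c. (norm (p i - c))\<^sup>2) ` C))"

definition kmeans_opt :: "nat \<Rightarrow> nat \<Rightarrow> (nat \<Rightarrow> 'a::euclidean_space) \<Rightarrow> real" where
  "kmeans_opt n k p = Inf {kmeans_cost n p C' | C'. finite C' \<and> card C' = k}"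

definition approx_kmeans :: "real \<Rightarrow> nat \<Rightarrow> nat \<Rightarrow> (nat \<Rightarrow> 'a::euclidean_space) \<Rightarrow> 'a set \<Rightarrow> bool" where
  "approx_kmeans lam n k p C \<longleftrightarrow> finite C \<and> card C = k \<and> kmeans_cost n p C \<le> lam * kmeans_opt n k p"

end

theory Submission
  imports Defs
begin

lemma euclid_infinite: "infinite (UNIV :: 'a::euclidean_space set)"
proof
  assume fin: "finite (UNIV :: 'a set)"
  obtain e :: 'a where e: "e \<in> Basis" using nonempty_Basis by blast
  hence "e \<noteq> 0" by auto
  hence inj: "inj (\<lambda>r::real. r *\<^sub>R e)" by (intro injI) (simp add: scaleR_cancel_right)
  have "finite (range (\<lambda>r::real. r *\<^sub>R e))" by (rule finite_subset[OF subset_UNIV fin])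
  hence "finite (UNIV :: real set)" using finite_imageD inj by blast
  thus False using infinite_UNIV_char_0[where 'a=real] by blast
qed

lemma pad_set:
  fixes A :: "'a::euclidean_space set"
  assumes "finite A" "card A \<le> k"
  shows "\<exists>B. finite B \<and> card B = k \<and> A \<subseteq> B"
proof -
  have "infinite (UNIV - A)" using euclid_infinite assms(1) by (simp add: Diff_infinite_finite)
  then obtain B where B: "finite B" "card B = k - card A" "B \<subseteq> UNIV - A"
    using infinite_arbitrarily_large by blast
  have "card (A \<union> B) = k" using B assms by (subst card_Un_disjoint) auto
  thus ?thesis using B assms by (intro exI[of _ "A \<union> B"]) auto
qed

lemma partition_sum:
  assumes "ordered_partition n k S"
  shows "(\<Sum>j\<in>{1..k}. \<Sum>i\<in>S j. f i) = (\<Sum>i\<in>{1..n}. (f i :: real))"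
proof -
  have U: "(\<Union>j\<in>{1..k}. S j) = {1..n}" and D: "\<forall>i\<in>{1..k}. \<forall>j\<in>{1..k}. i \<noteq> j \<longrightarrow> S i \<inter> S j = {}"
    using assms unfolding ordered_partition_def by auto
  have fin: "\<forall>j\<in>{1..k}. finite (S j)"
  proof
    fix j assume "j \<in> {1..k}"
    hence "S j \<subseteq> {1..n}" using U by blast
    thus "finite (S j)" using finite_subset by blast
  qed
  have "(\<Sum>i\<in>(\<Union>j\<in>{1..k}. S j). f i) = (\<Sum>j\<in>{1..k}. \<Sum>i\<in>S j. f i)"
    by (rule sum.UNION_disjoint) (use fin D in auto)
  thus ?thesis using U by simp
qed

lemma partition_sub:
  assumes "ordered_partition n k S" "j \<in> {1..k}"
  shows "S j \<subseteq> {1..n}"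
  using assms unfolding ordered_partition_def by blast

lemma Min_nonneg:
  assumes "finite X" "X \<noteq> {}" "\<forall>x\<in>X. (0::real) \<le> x"
  shows "0 \<le> Min X"
  using Min_in[OF assms(1,2)] assms(3) by blast

lemma kmeans_cost_nonneg:
  assumes "finite B" "B \<noteq> {}"
  shows "0 \<le> kmeans_cost n p B"
  unfolding kmeans_cost_def
  by (intro mult_nonneg_nonneg sum_nonneg Min_nonneg) (use assms in auto)

lemma assign_cost_nonneg: "0 \<le> assign_cost n k p S c"
  unfolding assign_cost_def by (intro mult_nonneg_nonneg sum_nonneg) auto

lemma sq_bound:
  fixes d x y :: real
  assumes "0 \<le> d" "d \<le> 2 * x + y"
  shows "d\<^sup>2 \<le> 8 * x\<^sup>2 + 2 * y\<^sup>2"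
proof -
  have "d\<^sup>2 \<le> (2 * x + y)\<^sup>2" using assms by (intro power_mono) auto
  also have "\<dots> \<le> 8 * x\<^sup>2 + 2 * y\<^sup>2" using sum_squares_ge_zero[of "2*x - y" 0]
    by (simp add: power2_eq_square algebra_simps)
  finally show ?thesis .
qed

lemma ex_nearest:
  fixes f :: "'b \<Rightarrow> real"
  assumes "finite C" "C \<noteq> {}"
  shows "\<exists>x\<in>C. \<forall>y\<in>C. f x \<le> f y"
proof -
  have "Min (f ` C) \<in> f ` C" using Min_in[OF finite_imageI[OF assms(1)]] assms(2) by simp
  then obtain x where x: "x \<in> C" "f x = Min (f ` C)" by (metis imageE)
  have "\<forall>y\<in>C. f x \<le> f y"
  proof
    fix y assume "y \<in> C"
    thus "f x \<le> f y" unfolding x(2) using assms(1) by (intro Min_le) auto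
  qed
  thus ?thesis using x(1) by blast
qed

theorem theorem2:
  fixes p :: "nat \<Rightarrow> 'a::euclidean_space" and n k :: nat
    and F :: "(nat \<Rightarrow> nat set) set" and lam :: real and C :: "'a set"
  assumes "n \<ge> 1" and "k \<ge> 1"
    and "F \<noteq> {}" and "\<forall>S\<in>F. ordered_partition n k S"
    and "lam \<ge> 1"
    and "approx_kmeans lam n k p C"
  shows "\<exists>q. (\<forall>j\<in>{1..k}. q j \<in> C) \<and>
           (\<exists>S\<in>F. assign_cost n k p S q \<le> (18 * lam + 16) * delta_opt_sq n k p F)"
proof -
  have finC: "finite C" and cardC: "card C = k" and appr: "kmeans_cost n p C \<le> lam * kmeans_opt n k p"
    using assms(6) unfolding approx_kmeans_def by auto
  have Cne: "C \<noteq> {}" using cardC assms(2) by auto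
  have npos: "real n > 0" using assms(1) by simp
  have opt_le: "kmeans_opt n k p \<le> assign_cost n k p S c" if S: "S \<in> F" for S c
  proof -
    have P: "ordered_partition n k S" using S assms(4) by auto
    have "card (c ` {1..k}) \<le> k" using card_image_le[of "{1..k}" c] by simp
    then obtain B where B: "finite B" "card B = k" "c ` {1..k} \<subseteq> B"
      using pad_set[of "c ` {1..k}" k] by auto
    have Bne: "B \<noteq> {}" using B assms(2) by auto
    have "kmeans_opt n k p \<le> kmeans_cost n p B"
      unfolding kmeans_opt_def
    proof (rule cInf_lower)
      show "kmeans_cost n p B \<in> {kmeans_cost n p C' |C'. finite C' \<and> card C' = k}" using B by auto
      show "bdd_below {kmeans_cost n p C' |C'. finite C' \<and> card C' = k}"
      proof (rule bdd_belowI[of _ 0])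
        fix x assume "x \<in> {kmeans_cost n p C' |C'. finite C' \<and> card C' = k}"
        then obtain C' where "finite C'" "card C' = k" "x = kmeans_cost n p C'" by blast
        moreover have "C' \<noteq> {}" using calculation assms(2) by auto
        ultimately show "0 \<le> x" using kmeans_cost_nonneg by simp
      qed
    qed
    also have "\<dots> = (1 / real n) * (\<Sum>j\<in>{1..k}. \<Sum>i\<in>S j. Min ((\<lambda>x. (norm (p i - x))\<^sup>2) ` B))"
      unfolding kmeans_cost_def using partition_sum[OF P] by simp
    also have "\<dots> \<le> assign_cost n k p S c"
      unfolding assign_cost_def
    proof (intro mult_left_mono sum_mono)
      fix j i assume j: "j \<in> {1..k}" and "i \<in> S j"
      have cj: "c j \<in> B" using B j by auto
      show "Min ((\<lambda>x. (norm (p i - x))\<^sup>2) ` B) \<le> (norm (p i - c j))\<^sup>2"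
        using B(1) imageI[OF cj, of "\<lambda>x. (norm (p i - x))\<^sup>2"] by (intro Min_le) auto
    qed simp
    finally show ?thesis .
  qed
  define K where "K = 8 + 2 * lam"
  have Kpos: "K > 0" using assms(5) K_def by simp
  have step: "\<exists>q. (\<forall>j\<in>{1..k}. q j \<in> C) \<and> assign_cost n k p S q \<le> K * assign_cost n k p S c"
    if S: "S \<in> F" for S c
  proof -
    have P: "ordered_partition n k S" using S assms(4) by auto
    define q where "q = (\<lambda>j. SOME x. x \<in> C \<and> (\<forall>y\<in>C. norm (c j - x) \<le> norm (c j - y)))"
    have q: "q j \<in> C \<and> (\<forall>y\<in>C. norm (c j - q j) \<le> norm (c j - y))" for j
    proof -
      have "\<exists>x. x \<in> C \<and> (\<forall>y\<in>C. norm (c j - x) \<le> norm (c j - y))"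
        using ex_nearest[OF finC Cne, of "\<lambda>x. norm (c j - x)"] by blast
      thus ?thesis unfolding q_def by (rule someI_ex)
    qed
    define mi where "mi = (\<lambda>i. Min ((\<lambda>x. (norm (p i - x))\<^sup>2) ` C))"
    have pt: "(norm (p i - q j))\<^sup>2 \<le> 8 * (norm (p i - c j))\<^sup>2 + 2 * mi i" for i j
    proof -
      have "mi i \<in> (\<lambda>x. (norm (p i - x))\<^sup>2) ` C"
        unfolding mi_def using Min_in[OF finite_imageI[OF finC]] Cne by simp
      then obtain y where y: "y \<in> C" "mi i = (norm (p i - y))\<^sup>2" by blast
      have "norm (c j - q j) \<le> norm (c j - y)" using q[of j] y(1) by blast
      also have "\<dots> \<le> norm (c j - p i) + norm (p i - y)" by (rule norm_diff_triangle_le[where y="p i"]) simp_all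
      finally have a: "norm (c j - q j) \<le> norm (p i - c j) + norm (p i - y)" by (simp add: norm_minus_commute)
      have "norm (p i - q j) \<le> norm (p i - c j) + norm (c j - q j)" by (rule norm_diff_triangle_le[where y="c j"]) simp_all
      hence "norm (p i - q j) \<le> 2 * norm (p i - c j) + norm (p i - y)" using a by simp
      hence "(norm (p i - q j))\<^sup>2 \<le> 8 * (norm (p i - c j))\<^sup>2 + 2 * (norm (p i - y))\<^sup>2"
        by (intro sq_bound) auto
      thus ?thesis using y by simp
    qed
    have "assign_cost n k p S q \<le> (1 / real n) * (\<Sum>j\<in>{1..k}. \<Sum>i\<in>S j. 8 * (norm (p i - c j))\<^sup>2 + 2 * mi i)"
      unfolding assign_cost_def by (intro mult_left_mono sum_mono pt) simp
    also have "\<dots> = 8 * assign_cost n k p S c + 2 * ((1 / real n) * (\<Sum>j\<in>{1..k}. \<Sum>i\<in>S j. mi i))"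
    proof -
      have "(\<Sum>j\<in>{1..k}. \<Sum>i\<in>S j. 8 * (norm (p i - c j))\<^sup>2 + 2 * mi i)
          = 8 * (\<Sum>j\<in>{1..k}. \<Sum>i\<in>S j. (norm (p i - c j))\<^sup>2) + 2 * (\<Sum>j\<in>{1..k}. \<Sum>i\<in>S j. mi i)"
        by (simp add: sum.distrib sum_distrib_left)
      thus ?thesis unfolding assign_cost_def by (simp add: algebra_simps)
    qed
    also have "(1 / real n) * (\<Sum>j\<in>{1..k}. \<Sum>i\<in>S j. mi i) = kmeans_cost n p C"
      unfolding kmeans_cost_def mi_def using partition_sum[OF P] by simp
    also have "kmeans_cost n p C \<le> lam * assign_cost n k p S c"
      using order_trans[OF appr mult_left_mono[OF opt_le[OF S, of c]]] assms(5) by simp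
    finally have "assign_cost n k p S q \<le> K * assign_cost n k p S c" unfolding K_def
      by (simp add: algebra_simps)
    thus ?thesis using q by blast
  qed
  define Dset where "Dset = {assign_cost n k p S c | S c. S \<in> F}"
  define A where "A = {assign_cost n k p S q | S q. S \<in> F \<and> (\<forall>j\<in>{1..k}. q j \<in> C)}"
  have finA: "finite A"
  proof -
    have "A \<subseteq> (\<lambda>(S', q'). assign_cost n k p S' q') ` (PiE {1..k} (\<lambda>_. Pow {1..n}) \<times> PiE {1..k} (\<lambda>_. C))"
    proof
      fix a assume "a \<in> A"
      then obtain S q where Sq: "S \<in> F" "\<forall>j\<in>{1..k}. q j \<in> C" "a = assign_cost n k p S q"
        unfolding A_def by auto
      have P: "ordered_partition n k S" using Sq assms(4) by auto
      have eq: "a = assign_cost n k p (restrict S {1..k}) (restrict q {1..k})"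
        unfolding Sq(3) assign_cost_def by (auto intro!: sum.cong)
      have mem: "(restrict S {1..k}, restrict q {1..k}) \<in> PiE {1..k} (\<lambda>_. Pow {1..n}) \<times> PiE {1..k} (\<lambda>_. C)"
        using partition_sub[OF P] Sq(2) by auto
      show "a \<in> (\<lambda>(S', q'). assign_cost n k p S' q') ` (PiE {1..k} (\<lambda>_. Pow {1..n}) \<times> PiE {1..k} (\<lambda>_. C))"
        apply (rule image_eqI[where x="(restrict S {1..k}, restrict q {1..k})"])
        using eq mem by simp_all
    qed
    moreover have "finite (PiE {1..k} (\<lambda>_. Pow {1..n}) \<times> PiE {1..k} (\<lambda>_. C))"
      using finC by (simp add: finite_PiE)
    ultimately show ?thesis using finite_subset finite_imageI by metis
  qed
  obtain S0 where S0: "S0 \<in> F" using assms(3) by blast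
  obtain q0 where "(\<forall>j\<in>{1..k}. q0 j \<in> C)" using step[OF S0, of undefined] by blast
  hence Ane: "A \<noteq> {}" using S0 unfolding A_def by blast
  define m where "m = Min A"
  have "m \<in> A" using Min_in[OF finA Ane] m_def by simp
  then obtain S q where Sq: "S \<in> F" "\<forall>j\<in>{1..k}. q j \<in> C" "m = assign_cost n k p S q"
    unfolding A_def by auto
  have Dne: "Dset \<noteq> {}" using S0 unfolding Dset_def by blast
  have "m / K \<le> Inf Dset"
  proof (rule cInf_greatest[OF Dne])
    fix a assume "a \<in> Dset"
    then obtain S' c where "S' \<in> F" "a = assign_cost n k p S' c" unfolding Dset_def by auto
    then obtain q' where "(\<forall>j\<in>{1..k}. q' j \<in> C)" "assign_cost n k p S' q' \<le> K * a"
      using step by blast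
    moreover have "assign_cost n k p S' q' \<in> A" using \<open>S' \<in> F\<close> calculation(1) unfolding A_def by blast
    ultimately have "m \<le> K * a" unfolding m_def using Min_le[OF finA, of "assign_cost n k p S' q'"] by linarith
    thus "m / K \<le> a" using Kpos by (simp add: field_simps mult.commute)
  qed
  hence mle: "m \<le> K * delta_opt_sq n k p F"
    using Kpos unfolding delta_opt_sq_def Dset_def by (simp add: field_simps mult.commute)
  have "0 \<le> Inf Dset" by (rule cInf_greatest[OF Dne]) (auto simp: Dset_def assign_cost_nonneg)
  hence "K * delta_opt_sq n k p F \<le> (18 * lam + 16) * delta_opt_sq n k p F"
    unfolding delta_opt_sq_def Dset_def K_def using assms(5) by (intro mult_right_mono) auto
  hence "assign_cost n k p S q \<le> (18 * lam + 16) * delta_opt_sq n k p F" using mle Sq(3) by linarith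
  thus ?thesis using Sq(1,2) by blast
qed

end
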